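(* Let $C_*>1$. There exists a constant $C>0$ depending only on $C_*$ such that the following holds. Let $\mathscr{T}$ be a $C_*$-regular triangular complex in $\mathbb{R}^3$ and $n$ a pseudo-unit edge director on $\mathscr{T}$. If $e=\kappa\cap\kappa'\in\mathscr{E}(\mathscr{T})$ satisfies $(\mathrm{diam}\,\kappa)(|Dn_\kappa|+|Dn_{\kappa'}|)<C$, then \[ |n(e)-\bar n(\kappa)|\le C'\,(\mathrm{diam}\,\kappa)(|Dn_\kappa|+|Dn_{\kappa'}|) \] for a constant $C'$ depending only on $C_*$.
   Context: A triangle is $\kappa=\mathrm{conv}(x,y,z)\subset\mathbb{R}^3$ with $x,y,z$ not collinear, with unit normal $\bar n(\kappa)$ one (chosen) of $\pm\frac{(y-x)\times(z-x)}{|(y-x)\times(z-x)|}$. A triangular complex is a finite family of triangles any two distinct of which meet in the empty set, a common vertex, or a whole common edge; $\mathscr{E}(\mathscr{T})$ is its set of edges; it is $C_*$-regular if $\mathcal{H}^2(\kappa)\ge C_*^{-1}(\mathrm{diam}\,\kappa)^2$ for all $\kappa$. For an edge $e=\kappa\cap\kappa'$, let $n_0(e)=\frac{\bar n(\kappa)+\bar n(\kappa')}{|\bar n(\kappa)+\bar n(\kappa')|}$. A pseudo-unit edge director is a map $n:\mathscr{E}(\mathscr{T})\to\mathbb{R}^3$ with $n(e)\cdot\tau(e)=0$ ($\tau(e)$ a unit vector along $e$) and $n(e)\cdot n_0(e)=1$ for every edge $e$. On each triangle $\kappa$, $n$ is extended to the unique affine map $\kappa\to\mathbb{R}^3$ taking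 the value $n(e)$ at the midpoint of each edge $e$ of $\kappa$, and $Dn_\kappa\in\mathbb{R}^{3\times3}$ is its constant gradient precomposed with the orthogonal projection onto the plane of $\kappa$. *)

theory Defs
  imports "HOL-Analysis.Analysis" "HOL-Analysis.Cross3"
begin

type_synonym R3 = "real^3"

definition tri_verts :: "R3 set \<Rightarrow> R3 set" where
  "tri_verts K = {v. v extreme_point_of K}"

definition is_triangle :: "R3 set \<Rightarrow> bool" where
  "is_triangle K \<longleftrightarrow> (\<exists>x y z. \<not> collinear {x, y, z} \<and> K = convex hull {x, y, z})"

definition tri_edges :: "R3 set \<Rightarrow> R3 set set" where
  "tri_edges K = {closed_segment a b | a b. a \<in> tri_verts K \<and> b \<in> tri_verts K \<and> a \<noteq> b}"

definition is_unit_normal :: "R3 set \<Rightarrow> R3 \<Rightarrow> bool" where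
  "is_unit_normal K v \<longleftrightarrow> (\<exists>x y z. \<not> collinear {x, y, z} \<and> K = convex hull {x, y, z} \<and>
      (v = (1 / norm (cross3 (y - x) (z - x))) *\<^sub>R cross3 (y - x) (z - x) \<or>
       v = - ((1 / norm (cross3 (y - x) (z - x))) *\<^sub>R cross3 (y - x) (z - x))))"

definition triangular_complex :: "R3 set set \<Rightarrow> bool" where
  "triangular_complex T \<longleftrightarrow> finite T \<and> (\<forall>K\<in>T. is_triangle K) \<and>
     (\<forall>K\<in>T. \<forall>K'\<in>T. K \<noteq> K' \<longrightarrow>
        K \<inter> K' = {} \<or>
        (\<exists>v. v \<in> tri_verts K \<and> v \<in> tri_verts K' \<and> K \<inter> K' = {v}) \<or>
        (\<exists>e. e \<in> tri_edges K \<and> e \<in> tri_edges K' \<and> K \<inter> K' = e))"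

definition complex_edges :: "R3 set set \<Rightarrow> R3 set set" where
  "complex_edges T = (\<Union>K\<in>T. tri_edges K)"

text \<open>Two-dimensional Hausdorff measure (area) of a triangle conv{x,y,z}:
  |(y-x) x (z-x)|/2 (independent of the vertex labelling).\<close>
definition tri_area :: "R3 set \<Rightarrow> real" where
  "tri_area K = (THE A. \<exists>x y z. \<not> collinear {x, y, z} \<and> K = convex hull {x, y, z} \<and>
                       A = norm (cross3 (y - x) (z - x)) / 2)"

definition regular_complex :: "real \<Rightarrow> R3 set set \<Rightarrow> bool" where
  "regular_complex Cs T \<longleftrightarrow> triangular_complex T \<and>
     (\<forall>K\<in>T. tri_area K \<ge> (1 / Cs) * (diameter K)\<^sup>2)"

definition n0 :: "(R3 set \<Rightarrow> R3) \<Rightarrow> R3 set \<Rightarrow> R3 set \<Rightarrow> R3" where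
  "n0 nb K K' = (1 / norm (nb K + nb K')) *\<^sub>R (nb K + nb K')"

definition pseudo_unit_director ::
    "R3 set set \<Rightarrow> (R3 set \<Rightarrow> R3) \<Rightarrow> (R3 set \<Rightarrow> R3) \<Rightarrow> bool" where
  "pseudo_unit_director T nb n \<longleftrightarrow>
     (\<forall>e\<in>complex_edges T.
        (\<forall>a b. e = closed_segment a b \<longrightarrow> n e \<bullet> (b - a) = 0) \<and>
        (\<forall>K\<in>T. \<forall>K'\<in>T. K \<noteq> K' \<and> K \<inter> K' = e \<longrightarrow> n e \<bullet> n0 nb K K' = 1))"

text \<open>Dn_K: gradient of the affine interpolant of the midpoint values, precomposed with the
  orthogonal projection onto the plane of K, as a 3x3 matrix.\<close>
definition Dn :: "(R3 set \<Rightarrow> R3) \<Rightarrow> R3 set \<Rightarrow> real^3^3" where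
  "Dn n K = (THE M. (\<forall>a b c. a \<in> tri_verts K \<and> b \<in> tri_verts K \<and> c \<in> tri_verts K \<and>
                         a \<noteq> b \<and> a \<noteq> c \<and> b \<noteq> c \<longrightarrow>
                  M *v ((1/2) *\<^sub>R (a + b) - (1/2) *\<^sub>R (a + c)) =
                    n (closed_segment a b) - n (closed_segment a c)) \<and>
                (\<forall>w. (\<forall>p\<in>K. \<forall>q\<in>K. w \<bullet> (p - q) = 0) \<longrightarrow> M *v w = 0))"

end

theory Submission
  imports Defs
begin

lemma norm_mv_le: fixes A :: "real^'n^'m" shows "norm (A *v x) \<le> norm A * norm x"
proof -
  have c: "(A *v x) $ i = A $ i \<bullet> x" for i
    by (simp add: matrix_vector_mult_def inner_vec_def mult.commute)
  have "(norm (A *v x))\<^sup>2 = (\<Sum>i\<in>UNIV. (A $ i \<bullet> x)\<^sup>2)"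
    by (simp add: norm_vec_def L2_set_def c)
     (simp add: sum_nonneg)
  also have "\<dots> \<le> (\<Sum>i\<in>UNIV. (norm (A $ i))\<^sup>2 * (norm x)\<^sup>2)"
    apply (rule sum_mono)
    subgoal for i using power_mono[OF Cauchy_Schwarz_ineq2[of "A$i" x] abs_ge_zero, of 2] by (simp add: power_mult_distrib)
    done
  also have "\<dots> = (norm A * norm x)\<^sup>2"
  proof -
    have nA: "(norm A)\<^sup>2 = (\<Sum>i\<in>UNIV. (norm (A$i))\<^sup>2)" by (simp add: power2_norm_eq_inner inner_vec_def)
    show ?thesis by (simp only: nA sum_distrib_right power_mult_distrib)
  qed
  finally show ?thesis
    by (meson norm_ge_zero power2_le_imp_le zero_le_mult_iff)
qed

lemma cross_cross: "cross3 a (cross3 b c) = (a \<bullet> c) *\<^sub>R b - (a \<bullet> b) *\<^sub>R c"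
  unfolding vec_eq_iff forall_3 by (simp add: cross3_def inner_vec_def sum_3 algebra_simps) 

lemma cross_dot_cross: "(cross3 a b) \<bullet> (cross3 c d) = (a \<bullet> c) * (b \<bullet> d) - (a \<bullet> d) * (b \<bullet> c)"
  by (simp add: cross3_simps)

lemma norm_cross_le: "norm (cross3 a b) \<le> norm a * norm b"
  by (metis norm_cross_dot abs_le_square_iff abs_of_nonneg le_add_same_cancel1 mult_nonneg_nonneg norm_ge_zero zero_le_power2)

lemma final_alg:
  fixes v n1 n2 :: "real^3"
  assumes n1: "norm n1 = 1" and n2: "norm n2 = 1" and s0: "n1 + n2 \<noteq> 0"
    and vs: "v \<bullet> (n1 + n2) = norm (n1 + n2)"
    and d1: "norm (cross3 v n1) \<le> \<delta>" and d2: "norm (cross3 v n2) \<le> \<delta>" and dh: "\<delta> \<le> 1/2"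
  shows "norm (v - n1) \<le> 5 * \<delta>"
proof -
  have dpos: "0 \<le> \<delta>" using d1 norm_ge_zero order_trans by blast
  define s where "s = n1 + n2"
  define r where "r = n1 - n2"
  have n11: "n1 \<bullet> n1 = 1" using n1 by (simp add: dot_square_norm)
  have n22: "n2 \<bullet> n2 = 1" using n2 by (simp add: dot_square_norm)
  have rs: "r \<bullet> s = 0" unfolding r_def s_def using n11 n22
    by (simp add: inner_diff_left inner_add_right inner_diff_right inner_commute)
  have snz: "norm s > 0" using s0 s_def by simp
  have vs': "v \<bullet> s = norm s" using vs s_def by simp
  have "cross3 v r = cross3 v n1 - cross3 v n2" unfolding r_def vec_eq_iff forall_3 by (simp add: cross3_def algebra_simps)
  hence vr: "norm (cross3 v r) \<le> 2 * \<delta>" using d1 d2 norm_triangle_ineq4[of "cross3 v n1" "cross3 v n2"] by simp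
  have "(cross3 v r) \<bullet> (cross3 s r) = (v \<bullet> s) * (r \<bullet> r)"
    using cross_dot_cross[of v r s r] rs by (simp add: inner_commute)
  hence "norm s * (norm r)\<^sup>2 = (cross3 v r) \<bullet> (cross3 s r)" using vs' by (simp add: dot_square_norm)
  also have "\<dots> \<le> norm (cross3 v r) * norm (cross3 s r)" by (rule norm_cauchy_schwarz)
  also have "\<dots> \<le> (2 * \<delta>) * (norm s * norm r)"
    by (rule mult_mono[OF vr norm_cross_le]) (use vr dpos in auto)
  finally have "norm s * (norm r * norm r) \<le> norm s * (2 * \<delta> * norm r)"
    by (simp add: power2_eq_square algebra_simps)
  hence "norm r * norm r \<le> 2 * \<delta> * norm r" using snz by simp
  hence rle: "norm r \<le> 2 * \<delta>"
  proof (cases "norm r = 0")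
    case True thus ?thesis using dpos by simp
  next
    case False hence "norm r > 0" by simp
    thus ?thesis using \<open>norm r * norm r \<le> 2 * \<delta> * norm r\<close> by (simp add: mult_le_cancel_right)
  qed
  have "2 *\<^sub>R n1 = s + r" unfolding s_def r_def by (simp add: scaleR_2)
  hence "norm (2 *\<^sub>R n1) \<le> norm s + norm r" by (metis norm_triangle_ineq)
  moreover have "norm (2 *\<^sub>R n1) = 2" using n1 by simp
  ultimately have "2 \<le> norm s + norm r" by simp
  hence sge: "norm s \<ge> 2 - 2 * \<delta>" using rle by linarith
  have sle: "norm s \<le> 2" unfolding s_def using n1 n2 norm_triangle_ineq[of n1 n2] by simp
  define \<alpha> where "\<alpha> = v \<bullet> n1"
  define p where "p = v - \<alpha> *\<^sub>R n1"
  have "(norm p)\<^sup>2 = p \<bullet> p" by (rule power2_norm_eq_inner)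
  also have "\<dots> = v \<bullet> v - \<alpha>\<^sup>2" unfolding p_def \<alpha>_def
    by (simp add: inner_diff_left inner_diff_right n11 inner_commute power2_eq_square algebra_simps)
  also have "\<dots> = (norm (cross3 v n1))\<^sup>2" using norm_cross_dot[of v n1] n1 unfolding \<alpha>_def
    by (simp add: power2_norm_eq_inner)
  finally have "norm p = norm (cross3 v n1)" by simp
  hence pd: "norm p \<le> \<delta>" using d1 by simp
  have ss: "(norm s)\<^sup>2 = 2 * (1 + n1 \<bullet> n2)" unfolding s_def
    by (simp add: power2_norm_eq_inner inner_add_left inner_add_right n11 n22 inner_commute)
  have "norm s = \<alpha> * (n1 \<bullet> s) + p \<bullet> s" using vs' unfolding p_def
    by (simp add: inner_diff_left)
  also have "n1 \<bullet> s = (norm s)\<^sup>2 / 2" using ss unfolding s_def by (simp add: inner_add_right n11)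
  finally have eq: "norm s = \<alpha> * (norm s)\<^sup>2 / 2 + p \<bullet> s" by simp
  have ps: "\<bar>p \<bullet> s\<bar> \<le> \<delta> * norm s"
  proof -
    have "\<bar>p \<bullet> s\<bar> \<le> norm p * norm s" by (rule Cauchy_Schwarz_ineq2)
    also have "\<dots> \<le> \<delta> * norm s" using pd by (intro mult_right_mono) auto
    finally show ?thesis .
  qed
  have "(\<alpha> - 1) * norm s = (2 - norm s) - 2 * (p \<bullet> s) / norm s"
    using eq snz by (simp add: field_simps power2_eq_square)
  hence "\<bar>\<alpha> - 1\<bar> * norm s = \<bar>(2 - norm s) - 2 * (p \<bullet> s) / norm s\<bar>"
    by (metis abs_mult abs_norm_cancel)
  also have "\<dots> \<le> \<bar>2 - norm s\<bar> + \<bar>2 * (p \<bullet> s) / norm s\<bar>" by (rule abs_triangle_ineq4)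
  also have "\<dots> = \<bar>2 - norm s\<bar> + 2 * \<bar>p \<bullet> s\<bar> / norm s" using snz by (simp add: abs_divide abs_mult)
  finally have "\<bar>\<alpha> - 1\<bar> * norm s \<le> \<bar>2 - norm s\<bar> + 2 * \<bar>p \<bullet> s\<bar> / norm s" .
  also have "\<dots> \<le> 2 * \<delta> + 2 * \<delta>"
  proof -
    have "\<bar>2 - norm s\<bar> \<le> 2 * \<delta>" using sge sle by linarith
    moreover have "2 * \<bar>p \<bullet> s\<bar> / norm s \<le> 2 * \<delta>" using ps snz by (simp add: pos_divide_le_eq)
    ultimately show ?thesis by linarith
  qed
  finally have "\<bar>\<alpha> - 1\<bar> * norm s \<le> 4 * \<delta>" by simp
  moreover have "\<bar>\<alpha> - 1\<bar> \<le> \<bar>\<alpha> - 1\<bar> * norm s" using sge dh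
    using mult_left_mono[of 1 "norm s" "\<bar>\<alpha> - 1\<bar>"] by simp
  ultimately have al: "\<bar>\<alpha> - 1\<bar> \<le> 4 * \<delta>" by linarith
  have "v - n1 = (\<alpha> - 1) *\<^sub>R n1 + p" unfolding p_def by (simp add: algebra_simps)
  hence "norm (v - n1) \<le> \<bar>\<alpha> - 1\<bar> + norm p" using n1 norm_triangle_ineq[of "(\<alpha> - 1) *\<^sub>R n1" p] by simp
  thus ?thesis using al pd by linarith
qed

lemma tri_bound:
  fixes a b c v w nK :: "real^3" and M :: "real^3^3"
  assumes ab: "a \<noteq> b" and Cs: "Cs > 0"
    and area: "norm (cross3 (b - a) (c - a)) / 2 \<ge> (1 / Cs) * (diameter (convex hull {a,b,c}))\<^sup>2"
    and nK: "nK = (1 / norm (cross3 (b - a) (c - a))) *\<^sub>R cross3 (b - a) (c - a) \<or>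
             nK = - ((1 / norm (cross3 (b - a) (c - a))) *\<^sub>R cross3 (b - a) (c - a))"
    and vp: "v \<bullet> (b - a) = 0" and wp: "w \<bullet> (c - a) = 0"
    and Mv: "M *v ((1/2) *\<^sub>R (a + b) - (1/2) *\<^sub>R (a + c)) = v - w"
  shows "norm (cross3 v nK) \<le> Cs / 4 * norm (b - a) * norm M"
proof -
  define K where "K = convex hull {a,b,c}"
  define d where "d = diameter K"
  define N where "N = cross3 (b - a) (c - a)"
  have bK: "bounded K" unfolding K_def by (simp add: compact_imp_bounded finite_imp_compact_convex_hull)
  have inK: "a \<in> K" "b \<in> K" "c \<in> K" unfolding K_def by (simp_all add: hull_inc)
  have dab: "norm (b - a) \<le> d" using diameter_bounded_bound[OF bK inK(2) inK(1)] by (simp add: d_def dist_norm)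
  have dbc: "norm (b - c) \<le> d" using diameter_bounded_bound[OF bK inK(2) inK(3)] by (simp add: d_def dist_norm)
  have dca: "norm (c - a) \<le> d" using diameter_bounded_bound[OF bK inK(3) inK(1)] by (simp add: d_def dist_norm)
  have dpos: "d > 0" proof -
    have "norm (b - a) > 0" using ab by simp
    thus ?thesis using dab by linarith
  qed
  have Nge: "norm N \<ge> 2 * d\<^sup>2 / Cs" using area unfolding N_def d_def K_def by (simp add: field_simps)
  have Npos: "norm N > 0" using Nge dpos Cs by (smt (verit) divide_pos_pos zero_less_power)
  have "(1/2) *\<^sub>R (a + b) - (1/2) *\<^sub>R (a + c) = (1/2) *\<^sub>R (b - c)" by (simp add: algebra_simps)
  hence "norm (v - w) \<le> norm M * (norm (b - c) / 2)" using Mv norm_mv_le[of M "(1/2) *\<^sub>R (b - c)"] by simp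
  also have "\<dots> \<le> norm M * (d / 2)" using dbc by (simp add: mult_left_mono)
  finally have vw: "norm (v - w) \<le> norm M * (d / 2)" .
  have "v \<bullet> (c - a) = (v - w) \<bullet> (c - a)" using wp by (simp add: inner_diff_left)
  hence "\<bar>v \<bullet> (c - a)\<bar> \<le> norm (v - w) * norm (c - a)" by (simp add: Cauchy_Schwarz_ineq2)
  also have "\<dots> \<le> (norm M * (d / 2)) * d" using vw dca dpos by (intro mult_mono) auto
  finally have vca: "\<bar>v \<bullet> (c - a)\<bar> \<le> norm M * d\<^sup>2 / 2" by (simp add: power2_eq_square)
  have "cross3 v N = (v \<bullet> (c - a)) *\<^sub>R (b - a)" unfolding N_def using cross_cross vp by simp
  hence "norm (cross3 v N) = \<bar>v \<bullet> (c - a)\<bar> * norm (b - a)" by simp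
  also have "\<dots> \<le> (norm M * d\<^sup>2 / 2) * norm (b - a)" using vca by (intro mult_right_mono) auto
  finally have vN: "norm (cross3 v N) \<le> norm M * d\<^sup>2 / 2 * norm (b - a)" .
  have "norm (cross3 v nK) = norm (cross3 v N) / norm N"
    using nK unfolding N_def[symmetric] by (auto simp: cross_mult_right)
  also have "\<dots> \<le> (norm M * d\<^sup>2 / 2 * norm (b - a)) / (2 * d\<^sup>2 / Cs)"
    using vN Nge Npos dpos Cs by (intro frac_le) auto
  also have "\<dots> = Cs / 4 * norm (b - a) * norm M" using dpos Cs by (simp add: field_simps power2_eq_square)
  finally show ?thesis .
qed

lemma noncol_distinct: "\<not> collinear {x, y, z} \<Longrightarrow> x \<noteq> y \<and> x \<noteq> z \<and> y \<noteq> z"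
  by (auto simp: collinear_3_eq_affine_dependent)

lemma tri_verts_hull: "\<not> collinear {x, y, z} \<Longrightarrow> tri_verts (convex hull {x, y, z}) = {x, y, z}"
  unfolding tri_verts_def
  by (auto simp: extreme_point_of_convex_hull_affine_independent collinear_3_eq_affine_dependent)

definition F3 :: "real^3 \<Rightarrow> real^3 \<Rightarrow> real^3 \<Rightarrow> real^3" where
  "F3 x y z = cross3 (y - x) (z - x)"

lemma F3_perm:
  "F3 y x z = - F3 x y z" "F3 x z y = - F3 x y z" "F3 y z x = F3 x y z"
  "F3 z x y = F3 x y z" "F3 z y x = - F3 x y z"
  unfolding F3_def vec_eq_iff forall_3 by (simp_all add: cross3_def algebra_simps)

lemma perm6:
  assumes "{a, b, c} = {x, y, z}" "a \<noteq> b" "a \<noteq> c" "b \<noteq> c"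
  shows "(x, y, z) \<in> {(a,b,c),(a,c,b),(b,a,c),(b,c,a),(c,a,b),(c,b,a)}"
proof -
  have xyz: "x \<in> {a,b,c}" "y \<in> {a,b,c}" "z \<in> {a,b,c}" using assms(1) by auto
  have d: "x \<noteq> y" "x \<noteq> z" "y \<noteq> z"
  proof -
    have "card {x,y,z} = 3" using assms by (metis card_3_iff)
    thus "x \<noteq> y" "x \<noteq> z" "y \<noteq> z" by (auto simp: card_insert_if split: if_splits)
  qed
  show ?thesis using xyz d by auto
qed

lemma cross_perm:
  assumes "{a, b, c} = {x, y, z}" "a \<noteq> b" "a \<noteq> c" "b \<noteq> c"
  shows "cross3 (y - x) (z - x) = cross3 (b - a) (c - a) \<or>
         cross3 (y - x) (z - x) = - cross3 (b - a) (c - a)"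
proof -
  have "(x, y, z) \<in> {(a,b,c),(a,c,b),(b,a,c),(b,c,a),(c,a,b),(c,b,a)}"
    using perm6[OF assms] .
  hence "F3 x y z = F3 a b c \<or> F3 x y z = - F3 a b c"
    using F3_perm[of a b c] F3_perm[of b a c] F3_perm[of a c b] by auto
  thus ?thesis unfolding F3_def .
qed

lemma norm_cross_perm:
  assumes "{a, b, c} = {x, y, z}" "a \<noteq> b" "a \<noteq> c" "b \<noteq> c"
  shows "norm (cross3 (y - x) (z - x)) = norm (cross3 (b - a) (c - a))"
  using cross_perm[OF assms] by auto

lemma tri_area_hull:
  assumes nc: "\<not> collinear {a, b, c}"
  shows "tri_area (convex hull {a, b, c}) = norm (cross3 (b - a) (c - a)) / 2"
  unfolding tri_area_def
proof (rule the_equality)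
  show "\<exists>x y z. \<not> collinear {x, y, z} \<and> convex hull {a, b, c} = convex hull {x, y, z} \<and>
      norm (cross3 (b - a) (c - a)) / 2 = norm (cross3 (y - x) (z - x)) / 2"
    using nc by blast
next
  fix A assume "\<exists>x y z. \<not> collinear {x, y, z} \<and> convex hull {a, b, c} = convex hull {x, y, z} \<and>
      A = norm (cross3 (y - x) (z - x)) / 2"
  then obtain x y z where h: "\<not> collinear {x, y, z}" "convex hull {a, b, c} = convex hull {x, y, z}"
      "A = norm (cross3 (y - x) (z - x)) / 2" by blast
  have "{a,b,c} = tri_verts (convex hull {a,b,c})" by (rule tri_verts_hull[OF nc, symmetric])
  also have "\<dots> = tri_verts (convex hull {x,y,z})" using h(2) by (rule arg_cong)
  also have "\<dots> = {x,y,z}" by (rule tri_verts_hull[OF h(1)])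
  finally have s: "{a,b,c} = {x,y,z}" .
  have "norm (cross3 (y - x) (z - x)) = norm (cross3 (b - a) (c - a))"
    using norm_cross_perm[OF s] noncol_distinct[OF nc] by simp
  thus "A = norm (cross3 (b - a) (c - a)) / 2" using h(3) by simp
qed

lemma unit_normal_hull:
  assumes nc: "\<not> collinear {a, b, c}" and u: "is_unit_normal (convex hull {a, b, c}) v"
  shows "v = (1 / norm (cross3 (b - a) (c - a))) *\<^sub>R cross3 (b - a) (c - a) \<or>
         v = - ((1 / norm (cross3 (b - a) (c - a))) *\<^sub>R cross3 (b - a) (c - a))"
proof -
  obtain x y z where h: "\<not> collinear {x, y, z}" "convex hull {a, b, c} = convex hull {x, y, z}"
     "v = (1 / norm (cross3 (y - x) (z - x))) *\<^sub>R cross3 (y - x) (z - x) \<or>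
       v = - ((1 / norm (cross3 (y - x) (z - x))) *\<^sub>R cross3 (y - x) (z - x))"
    using u unfolding is_unit_normal_def by blast
  have "{a,b,c} = tri_verts (convex hull {a,b,c})" by (rule tri_verts_hull[OF nc, symmetric])
  also have "\<dots> = tri_verts (convex hull {x,y,z})" using h(2) by (rule arg_cong)
  also have "\<dots> = {x,y,z}" by (rule tri_verts_hull[OF h(1)])
  finally have s: "{a,b,c} = {x,y,z}" .
  have n: "norm (cross3 (y - x) (z - x)) = norm (cross3 (b - a) (c - a))"
    using norm_cross_perm[OF s] noncol_distinct[OF nc] by simp
  have cp: "cross3 (y - x) (z - x) = cross3 (b - a) (c - a) \<or>
         cross3 (y - x) (z - x) = - cross3 (b - a) (c - a)" using cross_perm[OF s] noncol_distinct[OF nc] by simp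
  from h(3) cp n show ?thesis by (elim disjE) (simp_all)
qed

lemma third_vertex:
  assumes "a \<in> {x, y, z}" "b \<in> {x, y, z}" "a \<noteq> b" "x \<noteq> y" "x \<noteq> z" "y \<noteq> z"
  shows "\<exists>c. {a, b, c} = {x, y, z} \<and> c \<noteq> a \<and> c \<noteq> b"
proof -
  have "a = x \<or> a = y \<or> a = z" "b = x \<or> b = y \<or> b = z" using assms(1,2) by auto
  thus ?thesis
  proof (intro exI[of _ "if x \<noteq> a \<and> x \<noteq> b then x else if y \<noteq> a \<and> y \<noteq> b then y else z"])
    assume "a = x \<or> a = y \<or> a = z" "b = x \<or> b = y \<or> b = z"
    thus "{a, b, if x \<noteq> a \<and> x \<noteq> b then x else if y \<noteq> a \<and> y \<noteq> b then y else z} = {x, y, z} \<and>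
    (if x \<noteq> a \<and> x \<noteq> b then x else if y \<noteq> a \<and> y \<noteq> b then y else z) \<noteq> a \<and>
    (if x \<noteq> a \<and> x \<noteq> b then x else if y \<noteq> a \<and> y \<noteq> b then y else z) \<noteq> b"
      using assms(3-6) by (elim disjE) (simp_all add: insert_commute)
  qed
qed

lemma triple_cyc: "(cross3 x y) \<bullet> z = x \<bullet> (cross3 y z)"
  by (simp add: cross3_simps)

lemma cross_cross_left: "cross3 (cross3 a b) c = (a \<bullet> c) *\<^sub>R b - (b \<bullet> c) *\<^sub>R a"
  unfolding vec_eq_iff forall_3 by (simp add: cross3_def inner_vec_def sum_3 algebra_simps)

lemma expansion3:
  "(u1 \<bullet> cross3 u2 u3) *\<^sub>R x = (x \<bullet> cross3 u2 u3) *\<^sub>R u1 + (x \<bullet> cross3 u3 u1) *\<^sub>R u2 + (x \<bullet> cross3 u1 u2) *\<^sub>R u3"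
  unfolding vec_eq_iff forall_3 by (simp add: cross3_def inner_vec_def sum_3 algebra_simps)

lemma mv_outer:
  fixes f g f' g' x :: "real^3"
  shows "(\<chi> i j. (f$i * g$j + f'$i * g'$j) / D) *v x = ((g \<bullet> x) / D) *\<^sub>R f + ((g' \<bullet> x) / D) *\<^sub>R f'"
  unfolding vec_eq_iff forall_3
  by (simp add: matrix_vector_mult_def inner_vec_def sum_3 field_simps add_divide_distrib)

lemma cross_nonzero: "\<not> collinear {a, b, c} \<Longrightarrow> cross3 (b - a) (c - a) \<noteq> 0"
proof
  assume nc: "\<not> collinear {a, b, c}" and z: "cross3 (b - a) (c - a) = 0"
  have "collinear {0, b - a, c - a}" using z cross_eq_0 by blast
  hence "collinear {b, a, c}" by (subst collinear_3) simp_all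
  hence "collinear {a, b, c}" by (simp add: insert_commute)
  thus False using nc by simp
qed

lemma hull_perp:
  assumes "p \<in> convex hull {a, b, c}" "w \<bullet> b = w \<bullet> a" "w \<bullet> c = w \<bullet> a"
  shows "w \<bullet> p = w \<bullet> a"
proof -
  obtain u v t where "p = u *\<^sub>R a + v *\<^sub>R b + t *\<^sub>R c" "u + v + t = 1"
    using assms(1) unfolding convex_hull_3 by blast
  hence "w \<bullet> p = u * (w \<bullet> a) + v * (w \<bullet> a) + t * (w \<bullet> a)" using assms(2,3) by (simp add: inner_add_right)
  also have "\<dots> = (u + v + t) * (w \<bullet> a)" by (simp add: algebra_simps)
  finally show ?thesis using \<open>u + v + t = 1\<close> by simp
qed

definition DnP :: "(R3 set \<Rightarrow> R3) \<Rightarrow> R3 set \<Rightarrow> real^3^3 \<Rightarrow> bool" where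
  "DnP n K M \<longleftrightarrow> (\<forall>a b c. a \<in> tri_verts K \<and> b \<in> tri_verts K \<and> c \<in> tri_verts K \<and>
                         a \<noteq> b \<and> a \<noteq> c \<and> b \<noteq> c \<longrightarrow>
                  M *v ((1/2) *\<^sub>R (a + b) - (1/2) *\<^sub>R (a + c)) =
                    n (closed_segment a b) - n (closed_segment a c)) \<and>
                (\<forall>w. (\<forall>p\<in>K. \<forall>q\<in>K. w \<bullet> (p - q) = 0) \<longrightarrow> M *v w = 0)"

lemma Dn_eq: "Dn n K = (THE M. DnP n K M)"
  unfolding Dn_def DnP_def by simp

lemma Dn_prop:
  assumes nc: "\<not> collinear {a, b, c}"
  shows "Dn n (convex hull {a, b, c}) *v ((1/2) *\<^sub>R (a + b) - (1/2) *\<^sub>R (a + c))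
           = n (closed_segment a b) - n (closed_segment a c)"
proof -
  define K where "K = convex hull {a, b, c}"
  have V: "tri_verts K = {a, b, c}" unfolding K_def by (rule tri_verts_hull[OF nc])
  have dd: "a \<noteq> b" "a \<noteq> c" "b \<noteq> c" using noncol_distinct[OF nc] by auto
  define e1 where "e1 = b - c"
  define e2 where "e2 = c - a"
  define e3 where "e3 = cross3 e1 e2"
  define g1 where "g1 = cross3 e2 e3"
  define g2 where "g2 = cross3 e3 e1"
  define D where "D = e1 \<bullet> g1"
  define nab where "nab = n (closed_segment a b)"
  define nac where "nac = n (closed_segment a c)"
  define nbc where "nbc = n (closed_segment b c)"
  define f1 where "f1 = 2 *\<^sub>R (nab - nac)"
  define f2 where "f2 = 2 *\<^sub>R (nbc - nab)"
  define M0 :: "real^3^3" where "M0 = (\<chi> i j. (f1$i * g1$j + f2$i * g2$j) / D)"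
  have e3eq: "e3 = cross3 (b - a) (c - a)"
    unfolding e3_def e1_def e2_def vec_eq_iff forall_3 by (simp add: cross3_def algebra_simps)
  have e3nz: "e3 \<noteq> 0" using cross_nonzero[OF nc] e3eq by simp
  have Deq: "D = (norm e3)\<^sup>2"
  proof -
    have "D = e1 \<bullet> ((e2 \<bullet> e2) *\<^sub>R e1 - (e2 \<bullet> e1) *\<^sub>R e2)"
      unfolding D_def g1_def e3_def using cross_cross[of e2 e1 e2] by simp
    also have "\<dots> = (norm e1 * norm e2)\<^sup>2 - (e1 \<bullet> e2)\<^sup>2"
      by (simp add: inner_diff_right power2_eq_square dot_square_norm inner_commute power_mult_distrib)
    also have "\<dots> = (norm e3)\<^sup>2" unfolding e3_def using norm_cross_dot[of e1 e2] by simp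
    finally show ?thesis .
  qed
  have Dpos: "D > 0" using Deq e3nz by simp
  have g1e1: "g1 \<bullet> e1 = D" unfolding D_def by (simp add: inner_commute)
  have g1e2: "g1 \<bullet> e2 = 0" unfolding g1_def by (simp add: dot_cross_self)
  have g2e1: "g2 \<bullet> e1 = 0" unfolding g2_def by (simp add: dot_cross_self)
  have g2e2: "g2 \<bullet> e2 = D" unfolding g2_def D_def g1_def using triple_cyc[of e3 e1 e2] triple_cyc[of e1 e2 e3]
    by (simp add: inner_commute)
  have g1w: "g1 \<bullet> w = 0" if "w \<bullet> e1 = 0" "w \<bullet> e2 = 0" for w
    using that unfolding g1_def e3_def cross_cross by (simp add: inner_diff_right inner_commute)
  have g2w: "g2 \<bullet> w = 0" if "w \<bullet> e1 = 0" "w \<bullet> e2 = 0" for w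
    using that unfolding g2_def e3_def cross_cross_left by (simp add: inner_diff_right inner_commute)
  have M0v: "M0 *v x = ((g1 \<bullet> x) / D) *\<^sub>R f1 + ((g2 \<bullet> x) / D) *\<^sub>R f2" for x
    unfolding M0_def by (rule mv_outer)
  have M0e1: "M0 *v e1 = f1" using M0v g1e1 g2e1 Dpos by simp
  have M0e2: "M0 *v e2 = f2" using M0v g1e2 g2e2 Dpos by simp
  have abK: "a \<in> K" "b \<in> K" "c \<in> K" unfolding K_def by (simp_all add: hull_inc)
  have e3K: "e3 \<bullet> (p - q) = 0" if "p \<in> K" "q \<in> K" for p q
  proof -
    have "e3 \<bullet> e1 = 0" "e3 \<bullet> e2 = 0" unfolding e3_def by (simp_all add: dot_cross_self)
    hence h: "e3 \<bullet> b = e3 \<bullet> a" "e3 \<bullet> c = e3 \<bullet> a" unfolding e1_def e2_def by (simp_all add: inner_diff_right)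
    show ?thesis using hull_perp[OF that(1)[unfolded K_def] h] hull_perp[OF that(2)[unfolded K_def] h]
      by (simp add: inner_diff_right)
  qed
  have perpK: "w \<bullet> e1 = 0 \<and> w \<bullet> e2 = 0" if "\<forall>p\<in>K. \<forall>q\<in>K. w \<bullet> (p - q) = 0" for w
    using that abK unfolding e1_def e2_def by blast
  have seg: "closed_segment b a = closed_segment a b" "closed_segment c a = closed_segment a c"
    "closed_segment c b = closed_segment b c" by (simp_all add: closed_segment_commute)
  have PM0: "DnP n K M0"
    unfolding DnP_def
  proof (intro conjI allI impI)
    fix w assume "\<forall>p\<in>K. \<forall>q\<in>K. w \<bullet> (p - q) = 0"
    from perpK[OF this] show "M0 *v w = 0" using M0v g1w g2w by simp
  next
    fix p q r assume h: "p \<in> tri_verts K \<and> q \<in> tri_verts K \<and> r \<in> tri_verts K \<and> p \<noteq> q \<and> p \<noteq> r \<and> q \<noteq> r"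
    have vq: "(1/2) *\<^sub>R (p + q) - (1/2) *\<^sub>R (p + r) = (1/2) *\<^sub>R (q - r)" by (simp add: algebra_simps)
    have "M0 *v b - M0 *v c = f1" using M0e1 unfolding e1_def by (simp add: matrix_vector_mult_diff_distrib)
    hence Mb: "M0 *v b = M0 *v c + f1" by (subst (asm) eq_commute) (simp add: algebra_simps)
    have "M0 *v c - M0 *v a = f2" using M0e2 unfolding e2_def by (simp add: matrix_vector_mult_diff_distrib)
    hence Ma: "M0 *v a = M0 *v c - f2" by (subst (asm) eq_commute) (simp add: algebra_simps)
    have "M0 *v ((1/2) *\<^sub>R (p + q) - (1/2) *\<^sub>R (p + r)) = (1/2) *\<^sub>R (M0 *v q - M0 *v r)"
      unfolding vq by (simp add: matrix_vector_mult_diff_distrib matrix_vector_mult_scaleR)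
    moreover have "p \<in> {a,b,c}" "q \<in> {a,b,c}" "r \<in> {a,b,c}" "p \<noteq> q" "p \<noteq> r" "q \<noteq> r" using h V by auto
    hence "(p,q,r) \<in> {(a,b,c),(a,c,b),(b,a,c),(b,c,a),(c,a,b),(c,b,a)}" by auto
    ultimately show "M0 *v ((1/2) *\<^sub>R (p + q) - (1/2) *\<^sub>R (p + r)) = n (closed_segment p q) - n (closed_segment p r)"
    proof (elim insertE emptyE)
      assume H: "M0 *v ((1/2) *\<^sub>R (p + q) - (1/2) *\<^sub>R (p + r)) = (1/2) *\<^sub>R (M0 *v q - M0 *v r)"
      have f1': "(1/2) *\<^sub>R f1 = nab - nac" unfolding f1_def by simp
      have f2': "(1/2) *\<^sub>R f2 = nbc - nab" unfolding f2_def by simp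
      have A1: "(1/2) *\<^sub>R (M0 *v b - M0 *v c) = nab - nac" using Mb f1' by simp
      have A2: "(1/2) *\<^sub>R (M0 *v c - M0 *v a) = nbc - nab" using Ma f2' by simp
      have "M0 *v a - M0 *v b = - (f1 + f2)" using Ma Mb by (simp add: algebra_simps)
      hence "(1/2) *\<^sub>R (M0 *v a - M0 *v b) = (1/2) *\<^sub>R (- (f1 + f2))" by (rule arg_cong)
      also have "\<dots> = - ((1/2) *\<^sub>R f1 + (1/2) *\<^sub>R f2)"
        by (simp only: scaleR_minus_right scaleR_right_distrib)
      also have "\<dots> = - ((nab - nac) + (nbc - nab))" unfolding f1' f2' ..
      also have "\<dots> = nac - nbc" by (simp add: algebra_simps)
      finally have A3: "(1/2) *\<^sub>R (M0 *v a - M0 *v b) = nac - nbc" .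
      have S: "(1/2) *\<^sub>R (y - x) = - ((1/2) *\<^sub>R (x - y))" for x y :: "real^3" by (simp add: algebra_simps)
      have "(1/2) *\<^sub>R (M0 *v c - M0 *v b) = - ((1/2) *\<^sub>R (M0 *v b - M0 *v c))" by (simp add: algebra_simps)
      also have "\<dots> = - (nab - nac)" by (simp only: A1)
      also have "\<dots> = nac - nab" by simp
      finally have A1': "(1/2) *\<^sub>R (M0 *v c - M0 *v b) = nac - nab" .
      have "(1/2) *\<^sub>R (M0 *v a - M0 *v c) = - ((1/2) *\<^sub>R (M0 *v c - M0 *v a))" by (simp add: algebra_simps)
      also have "\<dots> = - (nbc - nab)" by (simp only: A2)
      also have "\<dots> = nab - nbc" by simp
      finally have A2': "(1/2) *\<^sub>R (M0 *v a - M0 *v c) = nab - nbc" .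
      have "(1/2) *\<^sub>R (M0 *v b - M0 *v a) = - ((1/2) *\<^sub>R (M0 *v a - M0 *v b))" by (simp add: algebra_simps)
      also have "\<dots> = - (nac - nbc)" by (simp only: A3)
      also have "\<dots> = nbc - nac" by simp
      finally have A3': "(1/2) *\<^sub>R (M0 *v b - M0 *v a) = nbc - nac" .
      show "(p, q, r) = (a, b, c) \<Longrightarrow> ?thesis" using H A1 by (simp add: nab_def nac_def)
      show "(p, q, r) = (a, c, b) \<Longrightarrow> ?thesis" using H A1' by (simp add: nab_def nac_def)
      show "(p, q, r) = (b, c, a) \<Longrightarrow> ?thesis" using H A2 by (simp add: nab_def nbc_def seg)
      show "(p, q, r) = (b, a, c) \<Longrightarrow> ?thesis" using H A2' by (simp add: nab_def nbc_def seg)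
      show "(p, q, r) = (c, a, b) \<Longrightarrow> ?thesis" using H A3 by (simp add: nac_def nbc_def seg)
      show "(p, q, r) = (c, b, a) \<Longrightarrow> ?thesis" using H A3' by (simp add: nac_def nbc_def seg)
    qed
  qed
  have uniq: "M = M0" if PM: "DnP n K M" for M
  proof -
    have P1: "M *v ((1/2) *\<^sub>R (x + y) - (1/2) *\<^sub>R (x + z)) = n (closed_segment x y) - n (closed_segment x z)"
      if "x \<in> {a,b,c}" "y \<in> {a,b,c}" "z \<in> {a,b,c}" "x \<noteq> y" "x \<noteq> z" "y \<noteq> z" for x y z
      using PM that V unfolding DnP_def by blast
    have P2: "M *v w = 0" if "\<forall>p\<in>K. \<forall>q\<in>K. w \<bullet> (p - q) = 0" for w
      using PM that unfolding DnP_def by blast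
    have "M *v ((1/2) *\<^sub>R e1) = nab - nac"
      using P1[of a b c] dd unfolding e1_def nab_def nac_def by (simp add: algebra_simps)
    hence "2 *\<^sub>R (M *v ((1/2) *\<^sub>R e1)) = f1" unfolding f1_def by simp
    hence Me1: "M *v e1 = f1" by (simp add: matrix_vector_mult_scaleR)
    have "M *v ((1/2) *\<^sub>R e2) = nbc - nab"
      using P1[of b c a] dd seg unfolding e2_def nab_def nbc_def by (simp add: algebra_simps)
    hence "2 *\<^sub>R (M *v ((1/2) *\<^sub>R e2)) = f2" unfolding f2_def by simp
    hence Me2: "M *v e2 = f2" by (simp add: matrix_vector_mult_scaleR)
    have Me3: "M *v e3 = 0" using P2 e3K by blast
    have M0e3: "M0 *v e3 = 0" using PM0 e3K unfolding DnP_def by blast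
    show ?thesis unfolding matrix_eq
    proof
      fix x
      have ex: "D *\<^sub>R x = (x \<bullet> g1) *\<^sub>R e1 + (x \<bullet> g2) *\<^sub>R e2 + (x \<bullet> e3) *\<^sub>R e3"
        unfolding D_def g1_def g2_def e3_def by (rule expansion3)
      have "D *\<^sub>R (M *v x) = M *v (D *\<^sub>R x)" by (simp add: matrix_vector_mult_scaleR)
      also have "\<dots> = (x \<bullet> g1) *\<^sub>R f1 + (x \<bullet> g2) *\<^sub>R f2"
        unfolding ex by (simp add: matrix_vector_right_distrib matrix_vector_mult_scaleR Me1 Me2 Me3)
      also have "\<dots> = M0 *v (D *\<^sub>R x)"
        unfolding ex by (simp add: matrix_vector_right_distrib matrix_vector_mult_scaleR M0e1 M0e2 M0e3)
      also have "\<dots> = D *\<^sub>R (M0 *v x)" by (simp add: matrix_vector_mult_scaleR)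
      finally show "M *v x = M0 *v x" using Dpos by simp
    qed
  qed
  have "Dn n K = M0" unfolding Dn_eq using PM0 uniq by (rule the_equality)
  hence "Dn n K *v ((1/2) *\<^sub>R (a + b) - (1/2) *\<^sub>R (a + c)) = n (closed_segment a b) - n (closed_segment a c)"
    using PM0 V dd unfolding DnP_def by auto
  thus ?thesis unfolding K_def .
qed

lemma unit_norm1:
  assumes "N \<noteq> 0" "v = (1 / norm N) *\<^sub>R N \<or> v = - ((1 / norm N) *\<^sub>R N)"
  shows "norm v = 1"
  using assms by auto

lemma tri_setup:
  assumes "is_triangle K" "e \<in> tri_edges K"
  obtains a b c where "\<not> collinear {a, b, c}" "K = convex hull {a, b, c}" "e = closed_segment a b"
    "closed_segment a c \<in> tri_edges K"
proof -
  obtain x y z where nc: "\<not> collinear {x, y, z}" and K: "K = convex hull {x, y, z}"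
    using assms(1) unfolding is_triangle_def by blast
  have V: "tri_verts K = {x, y, z}" unfolding K by (rule tri_verts_hull[OF nc])
  obtain a b where ab: "a \<in> tri_verts K" "b \<in> tri_verts K" "a \<noteq> b" "e = closed_segment a b"
    using assms(2) unfolding tri_edges_def by blast
  have dxyz: "x \<noteq> y" "x \<noteq> z" "y \<noteq> z" using noncol_distinct[OF nc] by auto
  obtain c where c: "{a, b, c} = {x, y, z}" "c \<noteq> a" "c \<noteq> b"
    using third_vertex[of a x y z b] ab V dxyz by auto
  have nc': "\<not> collinear {a, b, c}" using nc c(1) by simp
  have K': "K = convex hull {a, b, c}" using K c(1) by simp
  have "closed_segment a c \<in> tri_edges K"
    unfolding tri_edges_def using ab(1) c V by auto
  thus ?thesis using that nc' K' ab(4) by blast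
qed

theorem lemmaA2:
  fixes Cs :: real
  assumes "Cs > 1"
  shows "\<exists>C>0. \<exists>C'. \<forall>(T :: R3 set set) (nb :: R3 set \<Rightarrow> R3) (n :: R3 set \<Rightarrow> R3) K K' e.
     regular_complex Cs T \<and> (\<forall>L\<in>T. is_unit_normal L (nb L)) \<and>
     pseudo_unit_director T nb n \<and>
     K \<in> T \<and> K' \<in> T \<and> K \<noteq> K' \<and> e = K \<inter> K' \<and> e \<in> complex_edges T \<and>
     diameter K * (norm (Dn n K) + norm (Dn n K')) < C
     \<longrightarrow> norm (n e - nb K) \<le> C' * (diameter K * (norm (Dn n K) + norm (Dn n K')))"
proof -
  have Cs0: "Cs > 0" using assms by simp
  have main: "norm (n e - nb K) \<le> (5 * Cs / 4) * (diameter K * (norm (Dn n K) + norm (Dn n K')))"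
    if H: "regular_complex Cs T \<and> (\<forall>L\<in>T. is_unit_normal L (nb L)) \<and>
     pseudo_unit_director T nb n \<and>
     K \<in> T \<and> K' \<in> T \<and> K \<noteq> K' \<and> e = K \<inter> K' \<and> e \<in> complex_edges T \<and>
     diameter K * (norm (Dn n K) + norm (Dn n K')) < 2 / Cs"
    for T :: "R3 set set" and nb n K K' e
  proof -
    have reg: "regular_complex Cs T" and un: "\<forall>L\<in>T. is_unit_normal L (nb L)"
      and pud: "pseudo_unit_director T nb n" and KT: "K \<in> T" and K'T: "K' \<in> T" and KK: "K \<noteq> K'"
      and eK: "e = K \<inter> K'" and eE: "e \<in> complex_edges T"
      and small: "diameter K * (norm (Dn n K) + norm (Dn n K')) < 2 / Cs"
      using H by auto
    have tc: "triangular_complex T" and areaT: "\<forall>L\<in>T. tri_area L \<ge> (1 / Cs) * (diameter L)\<^sup>2"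
      using reg unfolding regular_complex_def by auto
    have triT: "\<forall>L\<in>T. is_triangle L" using tc unfolding triangular_complex_def by auto
    have edgesT: "tri_edges L \<subseteq> complex_edges T" if "L \<in> T" for L
      using that unfolding complex_edges_def by auto
    have pud1: "n f \<bullet> (y - x) = 0" if "f \<in> complex_edges T" "f = closed_segment x y" for f x y
      using pud that unfolding pseudo_unit_director_def by blast
    have pud2: "n e \<bullet> n0 nb K K' = 1"
      using pud eE KT K'T KK eK unfolding pseudo_unit_director_def by blast
    obtain L p q where pq: "L \<in> T" "p \<in> tri_verts L" "q \<in> tri_verts L" "p \<noteq> q" "e = closed_segment p q"
      using eE unfolding complex_edges_def tri_edges_def by blast
    have ene: "e \<noteq> {}" using pq(5) by auto
    have esing: "\<not> (\<exists>v. e = {v})" using pq(4,5) closed_segment_eq_sing by metis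
    have eKK: "e \<in> tri_edges K \<and> e \<in> tri_edges K'"
    proof -
      have "K \<inter> K' = {} \<or> (\<exists>v. v \<in> tri_verts K \<and> v \<in> tri_verts K' \<and> K \<inter> K' = {v}) \<or>
        (\<exists>e. e \<in> tri_edges K \<and> e \<in> tri_edges K' \<and> K \<inter> K' = e)"
        using tc KT K'T KK unfolding triangular_complex_def by blast
      thus ?thesis using ene esing eK by blast
    qed
    define v where "v = n e"
    define \<epsilon> where "\<epsilon> = diameter K * (norm (Dn n K) + norm (Dn n K'))"
    have bK: "bounded K"
    proof -
      obtain x y z where "K = convex hull {x, y, z}" using triT KT unfolding is_triangle_def by blast
      thus ?thesis by (simp add: compact_imp_bounded finite_imp_compact_convex_hull)
    qed
    have tb: "norm (cross3 v (nb L)) \<le> Cs / 4 * diameter K * norm (Dn n L)"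
      if LT: "L \<in> T" and eL: "e \<in> tri_edges L" for L
    proof -
      obtain a b c where nc: "\<not> collinear {a, b, c}" and L: "L = convex hull {a, b, c}"
        and eab: "e = closed_segment a b" and ac: "closed_segment a c \<in> tri_edges L"
        using tri_setup[OF _ eL] triT LT by blast
      have vp: "v \<bullet> (b - a) = 0" using pud1[OF eE eab] unfolding v_def .
      have wp: "n (closed_segment a c) \<bullet> (c - a) = 0" using pud1[of "closed_segment a c" a c] ac edgesT[OF LT] by blast
      have Mv: "Dn n L *v ((1/2) *\<^sub>R (a + b) - (1/2) *\<^sub>R (a + c)) = v - n (closed_segment a c)"
        using Dn_prop[OF nc, of n] unfolding L[symmetric] v_def eab .
      have "tri_area L \<ge> (1 / Cs) * (diameter L)\<^sup>2" using areaT LT by blast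
      hence area: "norm (cross3 (b - a) (c - a)) / 2 \<ge> (1 / Cs) * (diameter (convex hull {a,b,c}))\<^sup>2"
        unfolding L tri_area_hull[OF nc] .
      have nL: "nb L = (1 / norm (cross3 (b - a) (c - a))) *\<^sub>R cross3 (b - a) (c - a) \<or>
             nb L = - ((1 / norm (cross3 (b - a) (c - a))) *\<^sub>R cross3 (b - a) (c - a))"
        using unit_normal_hull[OF nc] un LT unfolding L by blast
      have ab: "a \<noteq> b" using noncol_distinct[OF nc] by simp
      have "norm (cross3 v (nb L)) \<le> Cs / 4 * norm (b - a) * norm (Dn n L)"
        by (rule tri_bound[OF ab Cs0 area nL vp wp Mv])
      moreover have "norm (b - a) \<le> diameter K"
      proof -
        have "a \<in> e" "b \<in> e" unfolding eab by auto
        hence "a \<in> K" "b \<in> K" using eK by auto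
        thus ?thesis using diameter_bounded_bound[OF bK] by (simp add: dist_norm norm_minus_commute)
      qed
      moreover have "Cs / 4 * norm (b - a) * norm (Dn n L) \<le> Cs / 4 * diameter K * norm (Dn n L)"
        using \<open>norm (b - a) \<le> diameter K\<close> Cs0 by (intro mult_right_mono mult_left_mono) auto
      ultimately show ?thesis by linarith
    qed
    have nKunit: "norm (nb L) = 1" if LT: "L \<in> T" and eL: "e \<in> tri_edges L" for L
    proof -
      obtain a b c where nc: "\<not> collinear {a, b, c}" and L: "L = convex hull {a, b, c}"
        and "e = closed_segment a b" and "closed_segment a c \<in> tri_edges L"
        using tri_setup[OF _ eL] triT LT by blast
      have "nb L = (1 / norm (cross3 (b - a) (c - a))) *\<^sub>R cross3 (b - a) (c - a) \<or>
             nb L = - ((1 / norm (cross3 (b - a) (c - a))) *\<^sub>R cross3 (b - a) (c - a))"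
        using unit_normal_hull[OF nc] un LT unfolding L by blast
      thus ?thesis using unit_norm1 cross_nonzero[OF nc] by blast
    qed
    define \<delta> where "\<delta> = Cs / 4 * \<epsilon>"
    have d1: "norm (cross3 v (nb K)) \<le> \<delta>"
    proof -
      have "norm (cross3 v (nb K)) \<le> Cs / 4 * diameter K * norm (Dn n K)" using tb KT eKK by blast
      also have "\<dots> \<le> \<delta>" unfolding \<delta>_def \<epsilon>_def using Cs0 diameter_ge_0[OF bK]
        by (simp add: algebra_simps mult_left_mono)
      finally show ?thesis .
    qed
    have d2: "norm (cross3 v (nb K')) \<le> \<delta>"
    proof -
      have "norm (cross3 v (nb K')) \<le> Cs / 4 * diameter K * norm (Dn n K')" using tb K'T eKK by blast
      also have "\<dots> \<le> \<delta>" unfolding \<delta>_def \<epsilon>_def using Cs0 diameter_ge_0[OF bK]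
        by (simp add: algebra_simps mult_left_mono)
      finally show ?thesis .
    qed
    have dh: "\<delta> \<le> 1/2" unfolding \<delta>_def \<epsilon>_def using small Cs0 by (simp add: field_simps)
    have s0: "nb K + nb K' \<noteq> 0"
    proof
      assume "nb K + nb K' = 0"
      hence "n0 nb K K' = 0" unfolding n0_def by simp
      thus False using pud2 by simp
    qed
    have vs: "v \<bullet> (nb K + nb K') = norm (nb K + nb K')"
    proof -
      have "(v \<bullet> (nb K + nb K')) / norm (nb K + nb K') = 1"
        using pud2 unfolding n0_def v_def by (simp add: divide_inverse mult.commute)
      thus ?thesis using s0 by (simp add: divide_eq_1_iff)
    qed
    have "norm (v - nb K) \<le> 5 * \<delta>"
      by (rule final_alg[OF nKunit[OF KT] nKunit[OF K'T] s0 vs d1 d2 dh]) (use eKK in auto)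
    thus ?thesis unfolding v_def \<delta>_def \<epsilon>_def by simp
  qed
  show ?thesis
    apply (rule exI[of _ "2 / Cs"])
    apply (rule conjI)
    subgoal using Cs0 by simp
    apply (rule exI[of _ "5 * Cs / 4"])
    using main by blast
qed

end
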